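(* Let $\mathbb{K}$ be a semiring. Every two-way $\mathbb{K}$-automaton admits a $\delta$-local in-covering.
   Context: With $A_{\vdash\dashv}=A\cup\{\vdash,\dashv\}$ ($\vdash,\dashv$ fresh end-markers), a two-way $\mathbb{K}$-automaton $(Q,A,E,I,T)$ has finite state set $Q$, partial functions $I,T:Q\to\mathbb{K}$ (supports $\underline I$, $\underline T$: initial/final states), and a partial function $E:Q\times(A_{\vdash\dashv}\times\{-1,+1\})\times Q\to\mathbb{K}$ whose support $\underline E$ (the transitions) contains no $(p,\vdash,-1,q)$ nor $(p,\dashv,+1,q)$. For $t=(p,a,d,q)$: $\sigma(t)=p$, $\tau(t)=q$, $\delta(t)=d$. A two-way automaton is $\delta$-local if for each state $p$ all transitions outgoing from $p$ have the same direction $\delta$. A morphism from $\mathcal{A}=(Q,A,E,I,T)$ to $\mathcal{B}=(R,A,F,J,U)$ is a map $\varphi:Q\to R$ with $J(\varphi(p))=I(p)$ for $p\in\underline I$, $U(\varphi(p))=T(p)$ for $p\in\underline T$, and for each $t=(p,a,d,q)\in\underline E$, $\tilde\varphi(t)=(\varphi(p),a,d,\varphi(q))\in\underline F$ with $F(\tilde\varphi(t))=E(t)$; it is surjective if $\varphi(Q)=R$, $\varphi(\underline I)=\underline J$, $\varphi(\underline T)=\underline U$, $\tilde\varphi(\underline E)=\underline F$. $\mathcal{A}$ is an in-covering of $\mathcal{B}$ if there is a surjective morphism $\varphi$ such that: for all $r\in\underline J$, $\varphi^{-1}(r)\subseteq\underline I$; for all $r\in\underline U$ there is exactly one $p\in\varphi^{-1}(r)\cap\underline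 T$; for all $t\in\underline F$ and all $q\in\varphi^{-1}(\tau(t))$ there is exactly one $t'\in\underline E$ with $\tilde\varphi(t')=t$ and $\tau(t')=q$. *)

theory Defs
  imports Main
begin

text \<open>Letters of the extended alphabet A_{|-,-|} = A plus two fresh end-markers.\<close>
datatype 'a letter = Sym 'a | LMark | RMark

text \<open>Directions: Lft stands for -1, Rgt stands for +1.\<close>
datatype dir = Lft | Rgt

text \<open>A two-way K-automaton (Q, A, E, I, T); partial functions are option-valued.\<close>
record ('q, 'a, 'k) twa =
  states :: "'q set"
  alph   :: "'a set"
  trans  :: "'q \<Rightarrow> 'a letter \<Rightarrow> dir \<Rightarrow> 'q \<Rightarrow> 'k option"
  init   :: "'q \<Rightarrow> 'k option"
  fin    :: "'q \<Rightarrow> 'k option"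

definition ext_alph :: "'a set \<Rightarrow> 'a letter set" where
  "ext_alph A = Sym ` A \<union> {LMark, RMark}"

definition init_supp :: "('q,'a,'k) twa \<Rightarrow> 'q set" where
  "init_supp M = {p. init M p \<noteq> None}"

definition fin_supp :: "('q,'a,'k) twa \<Rightarrow> 'q set" where
  "fin_supp M = {p. fin M p \<noteq> None}"

definition transitions :: "('q,'a,'k) twa \<Rightarrow> ('q \<times> 'a letter \<times> dir \<times> 'q) set" where
  "transitions M = {(p, a, d, q). trans M p a d q \<noteq> None}"

definition wf_twa :: "('q,'a,'k) twa \<Rightarrow> bool" where
  "wf_twa M \<longleftrightarrow> finite (states M) \<and>
     init_supp M \<subseteq> states M \<and> fin_supp M \<subseteq> states M \<and>
     (\<forall>(p, a, d, q) \<in> transitions M. p \<in> states M \<and> q \<in> states M \<and> a \<in> ext_alph (alph M)) \<and>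
     (\<forall>p q. trans M p LMark Lft q = None) \<and>
     (\<forall>p q. trans M p RMark Rgt q = None)"

definition src :: "'q \<times> 'a letter \<times> dir \<times> 'q \<Rightarrow> 'q" where
  "src t = (case t of (p, a, d, q) \<Rightarrow> p)"

definition tgt :: "'q \<times> 'a letter \<times> dir \<times> 'q \<Rightarrow> 'q" where
  "tgt t = (case t of (p, a, d, q) \<Rightarrow> q)"

definition direction :: "'q \<times> 'a letter \<times> dir \<times> 'q \<Rightarrow> dir" where
  "direction t = (case t of (p, a, d, q) \<Rightarrow> d)"

definition delta_local :: "('q,'a,'k) twa \<Rightarrow> bool" where
  "delta_local M \<longleftrightarrow> (\<forall>t \<in> transitions M. \<forall>t' \<in> transitions M.
      src t = src t' \<longrightarrow> direction t = direction t')"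

definition lift_trans :: "('q \<Rightarrow> 'r) \<Rightarrow> 'q \<times> 'a letter \<times> dir \<times> 'q \<Rightarrow> 'r \<times> 'a letter \<times> dir \<times> 'r" where
  "lift_trans \<phi> t = (case t of (p, a, d, q) \<Rightarrow> (\<phi> p, a, d, \<phi> q))"

definition is_morphism :: "('q \<Rightarrow> 'r) \<Rightarrow> ('q,'a,'k) twa \<Rightarrow> ('r,'a,'k) twa \<Rightarrow> bool" where
  "is_morphism \<phi> M N \<longleftrightarrow>
     alph M = alph N \<and>
     \<phi> ` states M \<subseteq> states N \<and>
     (\<forall>p \<in> init_supp M. init N (\<phi> p) = init M p) \<and>
     (\<forall>p \<in> fin_supp M. fin N (\<phi> p) = fin M p) \<and>
     (\<forall>p a d q. trans M p a d q \<noteq> None \<longrightarrow> trans N (\<phi> p) a d (\<phi> q) = trans M p a d q)"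

definition is_surj_morphism :: "('q \<Rightarrow> 'r) \<Rightarrow> ('q,'a,'k) twa \<Rightarrow> ('r,'a,'k) twa \<Rightarrow> bool" where
  "is_surj_morphism \<phi> M N \<longleftrightarrow> is_morphism \<phi> M N \<and>
     \<phi> ` states M = states N \<and>
     \<phi> ` init_supp M = init_supp N \<and>
     \<phi> ` fin_supp M = fin_supp N \<and>
     lift_trans \<phi> ` transitions M = transitions N"

definition is_in_covering_via :: "('q \<Rightarrow> 'r) \<Rightarrow> ('q,'a,'k) twa \<Rightarrow> ('r,'a,'k) twa \<Rightarrow> bool" where
  "is_in_covering_via \<phi> M N \<longleftrightarrow> is_surj_morphism \<phi> M N \<and>
     (\<forall>r \<in> init_supp N. {p \<in> states M. \<phi> p = r} \<subseteq> init_supp M) \<and>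
     (\<forall>r \<in> fin_supp N. \<exists>!p. p \<in> states M \<and> \<phi> p = r \<and> p \<in> fin_supp M) \<and>
     (\<forall>t \<in> transitions N. \<forall>q \<in> states M. \<phi> q = tgt t \<longrightarrow>
        (\<exists>!t'. t' \<in> transitions M \<and> lift_trans \<phi> t' = t \<and> tgt t' = q))"

definition is_in_covering :: "('q,'a,'k) twa \<Rightarrow> ('r,'a,'k) twa \<Rightarrow> bool" where
  "is_in_covering M N \<longleftrightarrow> (\<exists>\<phi>. is_in_covering_via \<phi> M N)"

end

theory Submission
  imports Defs
begin

definition dnum :: "dir \<Rightarrow> nat" where
  "dnum d = (case d of Lft \<Rightarrow> 0 | Rgt \<Rightarrow> 1)"

definition cov :: "('q, 'a, 'k) twa \<Rightarrow> ('q \<times> nat, 'a, 'k) twa" where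
  "cov B = \<lparr> states = states B \<times> {0,1}, alph = alph B,
     trans = (\<lambda>(p,n) a d (q,m). if n = dnum d \<and> m \<le> 1 then trans B p a d q else None),
     init = (\<lambda>(p,n). if n \<le> 1 then init B p else None),
     fin = (\<lambda>(p,n). if n = 0 then fin B p else None) \<rparr>"

lemma trans_cov: "trans (cov B) (p,n) a d (q,m) = (if n = dnum d \<and> m \<le> 1 then trans B p a d q else None)"
  by (simp add: cov_def)

lemma transitions_cov: "transitions (cov B) =
   {((p,n),a,d,(q,m)). n = dnum d \<and> m \<le> 1 \<and> (p,a,d,q) \<in> transitions B}"
  by (auto simp: transitions_def trans_cov split: if_splits)

lemma states_cov[simp]: "states (cov B) = states B \<times> {0,1}" by (simp add: cov_def)
lemma alph_cov[simp]: "alph (cov B) = alph B" by (simp add: cov_def)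

lemma dnum_le: "dnum d = 0 \<or> dnum d = 1" by (cases d) (auto simp: dnum_def)

theorem mainTheorem3:
  fixes B :: "('q, 'a, 'k :: semiring_1) twa"
  assumes "wf_twa B"
  shows "\<exists>A :: ('q \<times> nat, 'a, 'k) twa.
           wf_twa A \<and> delta_local A \<and> is_in_covering A B"
proof (intro exI conjI)
  have I: "init_supp (cov B) = {(p,n). n \<le> 1 \<and> p \<in> init_supp B}"
    by (auto simp: init_supp_def cov_def split: if_splits)
  have F: "fin_supp (cov B) = {(p,n). n = 0 \<and> p \<in> fin_supp B}"
    by (auto simp: fin_supp_def cov_def split: if_splits)
  have S: "states (cov B) = states B \<times> {0,1}" by (simp add: cov_def)
  show "wf_twa (cov B)"
    using assms dnum_le unfolding wf_twa_def
    by (auto simp: I F transitions_cov trans_cov split: prod.splits)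
  show "delta_local (cov B)"
    unfolding delta_local_def transitions_cov
    by (auto simp: src_def direction_def dnum_def split: dir.splits)
  have morph: "is_morphism fst (cov B) B"
    unfolding is_morphism_def
    by (auto simp: I F S trans_cov split: if_splits) (auto simp: cov_def)
  have ts: "lift_trans fst ` transitions (cov B) = transitions B"
  proof
    show "lift_trans fst ` transitions (cov B) \<subseteq> transitions B"
      by (auto simp: transitions_cov lift_trans_def)
  next
    show "transitions B \<subseteq> lift_trans fst ` transitions (cov B)"
    proof
      fix t assume t: "t \<in> transitions B"
      obtain p a d q where tt: "t = (p,a,d,q)" by (cases t) auto
      have "((p, dnum d), a, d, (q, 0::nat)) \<in> transitions (cov B)"
        using t tt by (simp add: transitions_cov)
      moreover have "lift_trans fst ((p, dnum d), a, d, (q, 0::nat)) = t"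
        using tt by (simp add: lift_trans_def)
      ultimately show "t \<in> lift_trans fst ` transitions (cov B)" by force
    qed
  qed
  have surj: "is_surj_morphism fst (cov B) B"
    unfolding is_surj_morphism_def
  proof (intro conjI morph ts)
    show "fst ` states (cov B) = states B" unfolding S by force
    show "fst ` init_supp (cov B) = init_supp B" unfolding I by force
    show "fst ` fin_supp (cov B) = fin_supp B" unfolding F by force
  qed
  show "is_in_covering (cov B) B"
    unfolding is_in_covering_def is_in_covering_via_def
  proof (rule exI[of _ fst], intro conjI surj ballI impI)
    fix r assume "r \<in> init_supp B"
    then show "{p \<in> states (cov B). fst p = r} \<subseteq> init_supp (cov B)"
      by (auto simp: I S)
  next
    fix r assume r: "r \<in> fin_supp B"
    show "\<exists>!p. p \<in> states (cov B) \<and> fst p = r \<and> p \<in> fin_supp (cov B)"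
    proof (rule ex1I[of _ "(r,0)"])
      show "(r,0) \<in> states (cov B) \<and> fst (r,0) = r \<and> (r,0) \<in> fin_supp (cov B)"
        using r assms by (auto simp: S F wf_twa_def)
    next
      fix p assume "p \<in> states (cov B) \<and> fst p = r \<and> p \<in> fin_supp (cov B)"
      then show "p = (r,0)" by (cases p) (auto simp: F)
    qed
  next
    fix t q assume t: "t \<in> transitions B" and q: "q \<in> states (cov B)" and tq: "fst q = tgt t"
    obtain p a d r where tt: "t = (p,a,d,r)" by (cases t) auto
    obtain q0 m where qq: "q = (q0, m)" by (cases q) auto
    have m: "m \<le> 1" "q0 = r" using q tq qq tt by (auto simp: S tgt_def)
    show "\<exists>!t'. t' \<in> transitions (cov B) \<and> lift_trans fst t' = t \<and> tgt t' = q"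
    proof (rule ex1I[of _ "((p, dnum d), a, d, q)"])
      show "((p, dnum d), a, d, q) \<in> transitions (cov B) \<and> lift_trans fst ((p, dnum d), a, d, q) = t \<and> tgt ((p, dnum d), a, d, q) = q"
        using t tt qq m by (simp add: transitions_cov lift_trans_def tgt_def)
    next
      fix t' assume h: "t' \<in> transitions (cov B) \<and> lift_trans fst t' = t \<and> tgt t' = q"
      obtain p' n a' d' q' where t': "t' = (p',a',d',q')" and "p' = (fst p', n)" by (cases t') auto
      then show "t' = ((p, dnum d), a, d, q)"
        using h tt by (cases p') (auto simp: transitions_cov lift_trans_def tgt_def)
    qed
  qed
qed

end
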